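(* Let $p$ be an odd prime such that $3\mid p-1$ and $p\nmid 2^{(p-1)/3}-1$. Then there do not exist integers $r$ with $0<r<p-1$ and positive integers $e$ with $\gcd(e,3)=1$ and $\gcd\big(r,\tfrac{p-1}{3}\big)=1$ such that $x^r\big(x^{e(p-1)/3}+1\big)$ is a permutation polynomial of $\mathbb{F}_p$.
   Context: A permutation polynomial of $\mathbb{F}_p$ is a polynomial inducing a bijection $\mathbb{F}_p\to\mathbb{F}_p$. *)

theory Defs
  imports "HOL-Computational_Algebra.Polynomial" "HOL-Computational_Algebra.Primes"
begin

definition perm_poly_mod :: "nat \<Rightarrow> int poly \<Rightarrow> bool" where
  "perm_poly_mod p f \<longleftrightarrow>
     bij_betw (\<lambda>x. poly f x mod int p) {0..<int p} {0..<int p}"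

end

theory Submission
  imports Defs "HOL-Number_Theory.Cong"
begin

lemma fresh_int:
  fixes a :: int and p :: nat
  assumes "prime p"
  shows "[(a+1)^p = a^p + 1] (mod int p)"
proof -
  have p0: "p > 0" using assms prime_gt_0_nat by blast
  have "(a+1)^p = (\<Sum>k\<le>p. of_nat (p choose k) * a^k * 1^(p-k))"
    by (rule binomial_ring)
  also have "\<dots> = (\<Sum>k\<in>{..p} - {0,p}. of_nat (p choose k) * a^k * 1^(p-k))
       + (\<Sum>k\<in>{0,p}. of_nat (p choose k) * a^k * 1^(p-k))"
    by (rule sum.subset_diff) auto
  also have "(\<Sum>k\<in>{0,p}. of_nat (p choose k) * a^k * 1^(p-k)) = a^p + 1"
    using p0 by simp
  finally have eq: "(a+1)^p - (a^p + 1) = (\<Sum>k\<in>{..p} - {0,p}. of_nat (p choose k) * a^k * 1^(p-k))"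
    by simp
  have "int p dvd (\<Sum>k\<in>{..p} - {0,p}. of_nat (p choose k) * a^k * 1^(p-k))"
  proof (rule dvd_sum)
    fix k assume "k \<in> {..p} - {0,p}"
    then have "p dvd (p choose k)" using dvd_choose_prime assms p0 by auto
    then have "int p dvd of_nat (p choose k)" by (simp add: int_dvd_int_iff)
    then show "int p dvd of_nat (p choose k) * a^k * 1^(p-k)" by simp
  qed
  then show ?thesis using eq by (simp add: cong_iff_dvd_diff)
qed

lemma fermat_int0:
  fixes p :: nat
  assumes "prime p"
  shows "[(int n)^p = int n] (mod int p)"
proof (induction n)
  case 0
  have "p > 0" using assms prime_gt_0_nat by blast
  then show ?case by (simp add: zero_power)
next
  case (Suc n)
  have "[(int n + 1)^p = int n ^ p + 1] (mod int p)" by (rule fresh_int[OF assms])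
  also have "[int n ^ p + 1 = int n + 1] (mod int p)" using Suc by (intro cong_add) auto
  finally show ?case by (simp add: add.commute)
qed

lemma fermat_int:
  fixes p :: nat and x :: int
  assumes "prime p" "0 \<le> x" "\<not> int p dvd x"
  shows "[x^(p-1) = 1] (mod int p)"
proof -
  have p0: "p > 0" using assms prime_gt_0_nat by blast
  obtain n where n: "x = int n" using assms(2) nonneg_int_cases by blast
  have "[x^p = x] (mod int p)" unfolding n by (rule fermat_int0[OF assms(1)])
  moreover have "x^p = x * x^(p-1)" using p0 by (cases p) auto
  ultimately have "[x * x^(p-1) = x * 1] (mod int p)" by simp
  moreover have "coprime x (int p)"
  proof -
    have "prime (int p)" using assms(1) by simp
    then have "coprime (int p) x" using assms(3) prime_imp_coprime by blast
    then show ?thesis by (simp add: coprime_commute)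
  qed
  ultimately show ?thesis using cong_mult_lcancel by blast
qed
lemma pow_swap: "((a::'a::monoid_mult)^m)^n = (a^n)^m"
  by (simp only: power_mult[symmetric] mult.commute)

lemma L1:
  fixes y P :: int and e :: nat
  assumes "[y^3 = 1] (mod P)" "\<not> [y = 1] (mod P)" "\<not> 3 dvd e"
  shows "\<not> [y^e = 1] (mod P)"
proof
  assume h: "[y^e = 1] (mod P)"
  have eq: "y^e = (y^3)^(e div 3) * y^(e mod 3)"
  proof -
    have "y^e = y^(3*(e div 3) + e mod 3)" by simp
    also have "\<dots> = (y^3)^(e div 3) * y^(e mod 3)" by (simp only: power_add power_mult)
    finally show ?thesis .
  qed
  have c: "[(y^3)^(e div 3) * y^(e mod 3) = 1^(e div 3) * y^(e mod 3)] (mod P)"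
    using assms(1) by (intro cong_mult cong_pow) auto
  have h2: "[y^(e mod 3) = 1] (mod P)"
  proof -
    have "y^(e mod 3) = 1^(e div 3) * y^(e mod 3)" by simp
    also have "[\<dots> = (y^3)^(e div 3) * y^(e mod 3)] (mod P)" using cong_sym[OF c] .
    also have "(y^3)^(e div 3) * y^(e mod 3) = y^e" using eq by simp
    also have "[y^e = 1] (mod P)" using h .
    finally show ?thesis .
  qed
  have "e mod 3 = 1 \<or> e mod 3 = 2" using assms(3) by presburger
  then show False
  proof
    assume "e mod 3 = 1" then show False using h2 assms(2) by simp
  next
    assume "e mod 3 = 2"
    then have "[y^2 = 1] (mod P)" using h2 by simp
    then have "[y * y^2 = y * 1] (mod P)" by (intro cong_mult) auto
    then have y3y: "[y^3 = y] (mod P)" by (simp add: power2_eq_square power3_eq_cube mult.assoc)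
    have "[y = 1] (mod P)" using cong_trans[OF cong_sym[OF y3y] assms(1)] .
    then show False using assms(2) by simp
  qed
qed

lemma L2:
  fixes z P :: int
  assumes "prime P" "[z^3 = 1] (mod P)" "\<not> [z = 1] (mod P)"
  shows "[z^2 + z + 1 = 0] (mod P)"
proof -
  have "P dvd (z - 1) * (z^2 + z + 1)"
    using assms(2) by (simp add: cong_iff_dvd_diff algebra_simps power2_eq_square power3_eq_cube)
  moreover have "\<not> P dvd z - 1" using assms(3) by (simp add: cong_iff_dvd_diff)
  ultimately have "P dvd z^2 + z + 1" using assms(1) prime_dvd_mult_iff by blast
  then show ?thesis by (simp add: cong_0_iff)
qed

lemma L3:
  fixes y P :: int and r e d :: nat
  assumes "[(y^e)^2 + y^e + 1 = 0] (mod P)" "even d"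
  shows "[(y^2)^r * ((y^2)^e + 1)^d = (y^r * (y^e + 1)^d)^2] (mod P)"
proof -
  define z where "z = y^e"
  have a: "[(z + 1)^2 = z] (mod P)"
  proof -
    have "[(z+1)^2 = (z^2 + z + 1) + z] (mod P)" by (simp add: power2_eq_square algebra_simps)
    also have "[(z^2 + z + 1) + z = 0 + z] (mod P)" using assms(1) z_def by (intro cong_add) auto
    finally show ?thesis by simp
  qed
  have b: "[z^2 + 1 = -z] (mod P)"
  proof -
    have "[z^2 + 1 = (z^2 + z + 1) - z] (mod P)" by simp
    also have "[(z^2 + z + 1) - z = 0 - z] (mod P)" using assms(1) z_def by (intro cong_diff) auto
    finally show ?thesis by simp
  qed
  have "(y^2)^r * ((y^2)^e + 1)^d = (y^2)^r * (z^2 + 1)^d"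
    by (simp add: z_def pow_swap[of y 2 e])
  also have "[\<dots> = (y^2)^r * (-z)^d] (mod P)" using b by (intro cong_mult cong_pow) auto
  also have "(y^2)^r * (-z)^d = (y^2)^r * z^d" using assms(2) by simp
  also have "[(y^2)^r * z^d = (y^2)^r * ((z+1)^2)^d] (mod P)" using cong_sym[OF a]
    by (intro cong_mult cong_pow) auto
  also have "(y^2)^r * ((z+1)^2)^d = (y^r * (y^e + 1)^d)^2"
  proof -
    have "(y^2)^r = (y^r)^2" "((z+1)^2)^d = ((z+1)^d)^2" by (rule pow_swap)+
    then show ?thesis by (simp add: z_def power_mult_distrib)
  qed
  finally show ?thesis .
qed


theorem proposition4p1:
  fixes p :: nat
  assumes "prime p" and "odd p" and "3 dvd (p - 1)"
    and "\<not> (p dvd (2 ^ ((p - 1) div 3) - 1))"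
  shows "\<not> (\<exists>r e :: nat. 0 < r \<and> r < p - 1 \<and> 0 < e \<and> gcd e 3 = 1
            \<and> gcd r ((p - 1) div 3) = 1
            \<and> perm_poly_mod p (monom 1 r * (monom 1 (e * ((p - 1) div 3)) + 1)))"
proof
  assume "\<exists>r e :: nat. 0 < r \<and> r < p - 1 \<and> 0 < e \<and> gcd e 3 = 1
            \<and> gcd r ((p - 1) div 3) = 1
            \<and> perm_poly_mod p (monom 1 r * (monom 1 (e * ((p - 1) div 3)) + 1))"
  then obtain r e :: nat where r0: "0 < r" and e3: "gcd e 3 = 1"
    and pp: "perm_poly_mod p (monom 1 r * (monom 1 (e * ((p - 1) div 3)) + 1))" by auto
  define d where "d = (p - 1) div 3"
  define P where "P = int p"
  define F where "F = (\<lambda>x::int. x^r * (x^(e*d) + 1))"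
  define G where "G = (\<lambda>x::int. x^r * (x^e + 1)^d)"
  have p1: "p > 1" using assms(1) prime_gt_1_nat by blast
  have P1: "P > 1" using p1 P_def by simp
  have primeP: "prime P" using assms(1) P_def by simp
  have d3: "3 * d = p - 1" using assms(3) d_def by simp
  have evd: "even d"
  proof -
    have "even (p - 1)" using assms(2) p1 by simp
    then have "even (3 * d)" using d3 by simp
    then show ?thesis by simp
  qed
  have bij: "bij_betw (\<lambda>x. F x mod P) {0..<P} {0..<P}"
    using pp unfolding perm_poly_mod_def F_def P_def d_def by (simp add: poly_monom)
  have inj: "inj_on (\<lambda>x. F x mod P) {0..<P}" using bij bij_betw_imp_inj_on by blast
  have one: "1 \<in> {0..<P}" using P1 by simp
  have "1 \<in> (\<lambda>x. F x mod P) ` {0..<P}" using bij_betw_imp_surj_on[OF bij] one by simp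
  then obtain x0 where Fx0': "1 = F x0 mod P" and x0: "x0 \<in> {0..<P}" by (rule imageE)
  from Fx0' have Fx0: "F x0 mod P = 1" by simp
  have x0nz: "x0 \<noteq> 0"
  proof
    assume "x0 = 0"
    then have "F x0 = 0" using r0 F_def by simp
    then show False using Fx0 by simp
  qed
  have ndvd: "\<not> P dvd x0"
  proof
    assume "P dvd x0"
    then have "P \<le> x0 \<or> x0 = 0" using x0 zdvd_imp_le by fastforce
    then show False using x0 x0nz by auto
  qed
  have cop: "coprime x0 P" using primeP ndvd by (simp add: prime_imp_coprime coprime_commute)
  have cop2: "coprime (x0^2) P" using cop by simp
  define y where "y = x0^d"
  have ferm: "[x0^(p-1) = 1] (mod P)"
    using fermat_int[OF assms(1)] x0 ndvd P_def by simp
  have y3: "[y^3 = 1] (mod P)"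
  proof -
    have "y^3 = x0^(d*3)" unfolding y_def by (rule power_mult[symmetric])
    also have "d*3 = p-1" using d3 by simp
    finally show ?thesis using ferm by simp
  qed
  have FG: "\<And>x. F x ^ d = G (x^d)"
  proof -
    fix x :: int
    have "F x ^ d = (x^r)^d * (x^(e*d) + 1)^d" by (simp add: F_def power_mult_distrib)
    also have "(x^r)^d = (x^d)^r" by (rule pow_swap)
    also have "x^(e*d) = (x^d)^e" by (simp add: power_mult pow_swap[of x e d])
    finally show "F x ^ d = G (x^d)" by (simp add: G_def)
  qed
  have Gcong: "\<And>a b. [a = b] (mod P) \<Longrightarrow> [G a = G b] (mod P)"
    unfolding G_def by (intro cong_mult cong_pow cong_add) auto
  have Fx01: "[F x0 = 1] (mod P)" using Fx0 P1 by (simp add: cong_def)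
  have Gy: "[G y = 1] (mod P)"
  proof -
    have "[F x0 ^ d = 1 ^ d] (mod P)" using Fx01 by (rule cong_pow)
    then show ?thesis using FG y_def by simp
  qed
  have two: "\<not> [2^d = 1] (mod P)"
  proof
    assume "[2^d = 1] (mod P)"
    then have "[int (2^d) = int 1] (mod int p)" using P_def by simp
    then have "[2^d = 1] (mod p)" using cong_int_iff by blast
    then have "p dvd 2^d - 1" using cong_altdef_nat by (metis one_le_power one_le_numeral)
    then show False using assms(4) d_def by simp
  qed
  have yn1: "\<not> [y = 1] (mod P)"
  proof
    assume "[y = 1] (mod P)"
    then have gg: "[G y = G 1] (mod P)" by (rule Gcong)
    have "[G 1 = 1] (mod P)" using cong_trans[OF cong_sym[OF gg] Gy] .
    then show False using two by (simp add: G_def)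
  qed
  have e3': "\<not> 3 dvd e"
  proof
    assume "3 dvd e" then have "3 dvd gcd e 3" by simp
    then show False using e3 by simp
  qed
  have zn1: "\<not> [y^e = 1] (mod P)" using L1[OF y3 yn1 e3'] .
  have z3: "[(y^e)^3 = 1] (mod P)"
  proof -
    have "[(y^3)^e = 1^e] (mod P)" using y3 by (rule cong_pow)
    then show ?thesis by (simp add: pow_swap[of y 3 e])
  qed
  have zq: "[(y^e)^2 + y^e + 1 = 0] (mod P)" using L2[OF primeP z3 zn1] .
  have Gy2: "[G (y^2) = 1] (mod P)"
  proof -
    have "[G (y^2) = (G y)^2] (mod P)" using L3[OF zq evd, of r] by (simp add: G_def)
    also have "[(G y)^2 = 1^2] (mod P)" using Gy by (rule cong_pow)
    finally show ?thesis by simp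
  qed
  define T where "T = {t \<in> {0..<P}. [t^d = 1] (mod P)}"
  define A where "A = {x \<in> {0..<P}. [x^d = y] (mod P)}"
  define B where "B = {x \<in> {0..<P}. [x^d = y^2] (mod P)}"
  have finT: "finite T" "finite A" "finite B" unfolding T_def A_def B_def
    by (rule finite_subset[of _ "{0..<P}"]; auto)+
  have "1 \<in> T" using P1 T_def by simp
  then have cT: "card T > 0" using finT card_gt_0_iff by blast
  have imgA: "\<And>x. x \<in> A \<Longrightarrow> F x mod P \<in> T"
  proof -
    fix x assume "x \<in> A"
    then have "[x^d = y] (mod P)" using A_def by simp
    then have gg: "[G (x^d) = G y] (mod P)" by (rule Gcong)
    have "[F x ^ d = 1] (mod P)" using cong_trans[OF gg Gy] FG by simp
    moreover have "[(F x mod P)^d = F x ^ d] (mod P)" by (intro cong_pow) (simp add: cong_def)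
    ultimately have "[(F x mod P)^d = 1] (mod P)" using cong_trans by blast
    then show "F x mod P \<in> T" using T_def P1 by simp
  qed
  have imgB: "\<And>x. x \<in> B \<Longrightarrow> F x mod P \<in> T"
  proof -
    fix x assume "x \<in> B"
    then have "[x^d = y^2] (mod P)" using B_def by simp
    then have gg: "[G (x^d) = G (y^2)] (mod P)" by (rule Gcong)
    have "[F x ^ d = 1] (mod P)" using cong_trans[OF gg Gy2] FG by simp
    moreover have "[(F x mod P)^d = F x ^ d] (mod P)" by (intro cong_pow) (simp add: cong_def)
    ultimately have "[(F x mod P)^d = 1] (mod P)" using cong_trans by blast
    then show "F x mod P \<in> T" using T_def P1 by simp
  qed
  have disj: "A \<inter> B = {}"
  proof (rule ccontr)
    assume "A \<inter> B \<noteq> {}"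
    then obtain x where "[x^d = y] (mod P)" "[x^d = y^2] (mod P)" using A_def B_def by blast
    then have "[y^2 = y] (mod P)" using cong_trans cong_sym by blast
    then have "P dvd y * (y - 1)" by (simp add: cong_iff_dvd_diff power2_eq_square algebra_simps)
    then have "P dvd y \<or> P dvd y - 1" using primeP prime_dvd_mult_iff by blast
    moreover have "\<not> P dvd y" using ndvd primeP y_def prime_dvd_power by blast
    moreover have "\<not> P dvd y - 1" using yn1 by (simp add: cong_iff_dvd_diff)
    ultimately show False by blast
  qed
  have "card (A \<union> B) \<le> card T"
  proof (rule card_inj_on_le)
    show "inj_on (\<lambda>x. F x mod P) (A \<union> B)"
      by (rule inj_on_subset[OF inj]) (auto simp: A_def B_def)
    show "(\<lambda>x. F x mod P) ` (A \<union> B) \<subseteq> T" using imgA imgB by blast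
    show "finite T" using finT by simp
  qed
  moreover have "card A + card B = card (A \<union> B)" using card_Un_disjoint finT disj by metis
  moreover have "card T \<le> card A"
  proof (rule card_inj_on_le)
    show "inj_on (\<lambda>t. x0 * t mod P) T"
    proof
      fix a b assume ab: "a \<in> T" "b \<in> T" "x0 * a mod P = x0 * b mod P"
      then have "[x0 * a = x0 * b] (mod P)" by (simp add: cong_def)
      then have "[a = b] (mod P)" using cong_mult_lcancel cop by blast
      then show "a = b" using ab(1,2) T_def cong_less_imp_eq_int by auto
    qed
    show "(\<lambda>t. x0 * t mod P) ` T \<subseteq> A"
    proof
      fix u assume "u \<in> (\<lambda>t. x0 * t mod P) ` T"
      then obtain t where t: "t \<in> T" "u = x0 * t mod P" by blast
      have "[u^d = (x0*t)^d] (mod P)" using t by (intro cong_pow) (simp add: cong_def)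
      moreover have "(x0*t)^d = y * t^d" using y_def by (simp add: power_mult_distrib)
      moreover have "[y * t^d = y * 1] (mod P)" using t T_def by (intro cong_mult) auto
      ultimately have "[u^d = y] (mod P)" using cong_trans[of "u^d" "(x0*t)^d" P "y * 1"] by simp
      then show "u \<in> A" using A_def t P1 by simp
    qed
    show "finite A" using finT by simp
  qed
  moreover have "card T \<le> card B"
  proof (rule card_inj_on_le)
    show "inj_on (\<lambda>t. x0^2 * t mod P) T"
    proof
      fix a b assume ab: "a \<in> T" "b \<in> T" "x0^2 * a mod P = x0^2 * b mod P"
      then have "[x0^2 * a = x0^2 * b] (mod P)" by (simp add: cong_def)
      then have "[a = b] (mod P)" using cong_mult_lcancel cop2 by blast
      then show "a = b" using ab(1,2) T_def cong_less_imp_eq_int by auto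
    qed
    show "(\<lambda>t. x0^2 * t mod P) ` T \<subseteq> B"
    proof
      fix u assume "u \<in> (\<lambda>t. x0^2 * t mod P) ` T"
      then obtain t where t: "t \<in> T" "u = x0^2 * t mod P" by blast
      have "[u^d = (x0^2*t)^d] (mod P)" using t by (intro cong_pow) (simp add: cong_def)
      moreover have "(x0^2*t)^d = y^2 * t^d" using y_def
        by (simp add: power_mult_distrib pow_swap[of x0 2 d])
      moreover have "[y^2 * t^d = y^2 * 1] (mod P)" using t T_def by (intro cong_mult) auto
      ultimately have "[u^d = y^2] (mod P)" using cong_trans[of "u^d" "(x0^2*t)^d" P "y^2 * 1"] by simp
      then show "u \<in> B" using B_def t P1 by simp
    qed
    show "finite B" using finT by simp
  qed
  ultimately show False using cT by linarith
qed

end
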